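(* Let $N\ge 2$ be an integer and index rows and columns of $N\times N$ matrices by $0,1,\dots,N-1$. Let $H_{BH}$ be the complex symmetric tridiagonal matrix with $(H_{BH})_{n,n}={\rm i}(2n-N+1)$ and $(H_{BH})_{n-1,n}=(H_{BH})_{n,n-1}=\sqrt{n(N-n)}$ ($n=1,\dots,N-1$), and let $H_{AO}$ be the real tridiagonal matrix with $(H_{AO})_{n,n}=2n-N+1$, $(H_{AO})_{n-1,n}=\sqrt{n(N-n)}$, $(H_{AO})_{n,n-1}=-\sqrt{n(N-n)}$ ($n=1,\dots,N-1$), all other entries being zero. Let $\beta=-1+{\rm i}$ and define diagonal matrices $B_{n,n}=(-\beta)^{-n}$, $A_{n,n}=\beta^n$, and the upper triangular real matrix $R$ with entries $$R_{n,n+q}=\sqrt{\binom{n+q}{n}\binom{N-1-n}{q}},\qquad n=0,\dots,N-1,\ q=0,\dots,N-1-n,$$ and $R_{n,m}=0$ for $m<n$. Put $S=B\,R\,A$. Then $S$ is invertible, $H_{AO}=S\,H_{BH}\,S^{-1}$, and moreover $S=Q_{AO}\,Q_{BH}^{-1}$, where $Q_{BH}=D P G$ and $Q_{AO}=C P F$ with $P_{m,q}=\binom{N-1-m}{q}$, $D_{n,n}={\rm i}^n\sqrt{\binom{N-1}{n}}$, $G_{n,n}=(-{\rm i})^{N-n-1}(N-1-n)!$, $C_{n,n}=\sqrt{\binom{N-1}{n}}$, $F_{n,n}=(-1)^{N-n-1}(N-1-n)!$ (diagonal matrices; $\binom{a}{b}=0$ for $b>a$).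
   Context: $H_{BH}$ is the Bose–Hubbard Hamiltonian at its exceptional point $z=1$ and $H_{AO}$ the anharmonic-oscillator Hamiltonian at its exceptional point $\lambda=0$; $Q_{BH}$, $Q_{AO}$ are the transition matrices satisfying $H_{BH}Q_{BH}=Q_{BH}J$ and $H_{AO}Q_{AO}=Q_{AO}J$, where $J$ is the $N\times N$ nilpotent Jordan block ($J_{n,n+1}=1$, other entries zero). *)

theory Defs
  imports Complex_Main "Jordan_Normal_Form.Matrix"
begin

definition H_BH :: "nat \<Rightarrow> complex mat" where
  "H_BH N = mat N N (\<lambda>(i,j).
     if i = j then \<i> * of_int (2 * int i - int N + 1)
     else if j = i + 1 then complex_of_real (sqrt (real (j * (N - j))))
     else if i = j + 1 then complex_of_real (sqrt (real (i * (N - i))))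
     else 0)"

definition H_AO :: "nat \<Rightarrow> complex mat" where
  "H_AO N = mat N N (\<lambda>(i,j).
     if i = j then of_int (2 * int i - int N + 1)
     else if j = i + 1 then complex_of_real (sqrt (real (j * (N - j))))
     else if i = j + 1 then - complex_of_real (sqrt (real (i * (N - i))))
     else 0)"

definition beta :: complex where "beta = -1 + \<i>"

definition B_mat :: "nat \<Rightarrow> complex mat" where
  "B_mat N = mat N N (\<lambda>(i,j). if i = j then inverse ((- beta) ^ i) else 0)"

definition A_mat :: "nat \<Rightarrow> complex mat" where
  "A_mat N = mat N N (\<lambda>(i,j). if i = j then beta ^ i else 0)"

definition R_mat :: "nat \<Rightarrow> complex mat" where
  "R_mat N = mat N N (\<lambda>(n,m). if n \<le> m then
      complex_of_real (sqrt (real ((m choose n) * ((N - 1 - n) choose (m - n))))) else 0)"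

definition S_mat :: "nat \<Rightarrow> complex mat" where
  "S_mat N = B_mat N * R_mat N * A_mat N"

definition P_mat :: "nat \<Rightarrow> complex mat" where
  "P_mat N = mat N N (\<lambda>(m,q). of_nat ((N - 1 - m) choose q))"

definition D_mat :: "nat \<Rightarrow> complex mat" where
  "D_mat N = mat N N (\<lambda>(i,j). if i = j then
      \<i> ^ i * complex_of_real (sqrt (real ((N - 1) choose i))) else 0)"

definition G_mat :: "nat \<Rightarrow> complex mat" where
  "G_mat N = mat N N (\<lambda>(i,j). if i = j then
      (- \<i>) ^ (N - i - 1) * of_nat (fact (N - 1 - i)) else 0)"

definition C_mat :: "nat \<Rightarrow> complex mat" where
  "C_mat N = mat N N (\<lambda>(i,j). if i = j then
      complex_of_real (sqrt (real ((N - 1) choose i))) else 0)"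

definition F_mat :: "nat \<Rightarrow> complex mat" where
  "F_mat N = mat N N (\<lambda>(i,j). if i = j then
      (- 1) ^ (N - i - 1) * of_nat (fact (N - 1 - i)) else 0)"

definition Q_BH :: "nat \<Rightarrow> complex mat" where
  "Q_BH N = D_mat N * P_mat N * G_mat N"

definition Q_AO :: "nat \<Rightarrow> complex mat" where
  "Q_AO N = C_mat N * P_mat N * F_mat N"

end

theory Submission
  imports Defs "Jordan_Normal_Form.Determinant"
begin

definition dg :: "nat \<Rightarrow> (nat \<Rightarrow> complex) \<Rightarrow> complex mat" where
  "dg N f = mat N N (\<lambda>(i,j). if i = j then f i else 0)"

lemma dg_carrier[simp]: "dg N f \<in> carrier_mat N N" by (simp add: dg_def)

lemma mult_mat_entry:
  assumes "A \<in> carrier_mat n k" "B \<in> carrier_mat k m" "i < n" "j < m"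
  shows "(A * B) $$ (i,j) = (\<Sum>l<k. A $$ (i,l) * B $$ (l,j))"
  using assms by (simp add: scalar_prod_def lessThan_atLeast0 algebra_simps)

lemma dg_mult_left:
  assumes "X \<in> carrier_mat N M"
  shows "dg N f * X = mat N M (\<lambda>(i,j). f i * X $$ (i,j))"
proof (rule eq_matI)
  fix i j assume "i < dim_row (mat N M (\<lambda>(i,j). f i * X $$ (i,j)))" "j < dim_col (mat N M (\<lambda>(i,j). f i * X $$ (i,j)))"
  hence ij: "i < N" "j < M" by auto
  have "(dg N f * X) $$ (i,j) = (\<Sum>l<N. dg N f $$ (i,l) * X $$ (l,j))"
    using mult_mat_entry[OF dg_carrier assms ij] .
  also have "\<dots> = (\<Sum>l<N. if l = i then f i * X $$ (i,j) else 0)"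
    by (rule sum.cong, auto simp: dg_def ij)
  also have "\<dots> = f i * X $$ (i,j)" using ij by simp
  finally show "(dg N f * X) $$ (i,j) = mat N M (\<lambda>(i,j). f i * X $$ (i,j)) $$ (i,j)" using ij by simp
qed (use assms in \<open>auto simp: dg_def\<close>)

lemma dg_mult_right:
  assumes "X \<in> carrier_mat M N"
  shows "X * dg N f = mat M N (\<lambda>(i,j). X $$ (i,j) * f j)"
proof (rule eq_matI)
  fix i j assume "i < dim_row (mat M N (\<lambda>(i,j). X $$ (i,j) * f j))" "j < dim_col (mat M N (\<lambda>(i,j). X $$ (i,j) * f j))"
  hence ij: "i < M" "j < N" by auto
  have "(X * dg N f) $$ (i,j) = (\<Sum>l<N. X $$ (i,l) * dg N f $$ (l,j))"
    using mult_mat_entry[OF assms dg_carrier ij] .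
  also have "\<dots> = (\<Sum>l<N. if l = j then X $$ (i,j) * f j else 0)"
    by (rule sum.cong, auto simp: dg_def ij)
  also have "\<dots> = X $$ (i,j) * f j" using ij by simp
  finally show "(X * dg N f) $$ (i,j) = mat M N (\<lambda>(i,j). X $$ (i,j) * f j) $$ (i,j)" using ij by simp
qed (use assms in \<open>auto simp: dg_def\<close>)

lemma sum3:
  fixes f :: "nat \<Rightarrow> complex"
  assumes "i < N" "\<And>k. k < N \<Longrightarrow> k \<noteq> i \<Longrightarrow> k + 1 \<noteq> i \<Longrightarrow> k \<noteq> i + 1 \<Longrightarrow> f k = 0"
  shows "(\<Sum>k<N. f k) = (if 0 < i then f (i-1) else 0) + f i + (if i + 1 < N then f (i+1) else 0)"
proof -
  let ?T = "{k. k < N \<and> (k + 1 = i \<or> k = i \<or> k = i + 1)}"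
  have "(\<Sum>k<N. f k) = (\<Sum>k\<in>?T. f k)"
    by (rule sum.mono_neutral_right) (auto simp: assms(2))
  also have "?T = (if 0 < i then {i-1} else {}) \<union> {i} \<union> (if i + 1 < N then {i+1} else {})"
    using assms(1) by auto
  also have "(\<Sum>k\<in>\<dots>. f k) = (if 0 < i then f (i-1) else 0) + f i + (if i + 1 < N then f (i+1) else 0)"
    by (cases "0 < i"; cases "i + 1 < N"; simp)
  finally show ?thesis .
qed

lemma det_inv_ex:
  assumes A: "(A :: complex mat) \<in> carrier_mat n n" and d: "det A \<noteq> 0"
  shows "\<exists>B \<in> carrier_mat n n. A * B = 1\<^sub>m n \<and> B * A = 1\<^sub>m n"
  using det_non_zero_imp_unit[OF A d, of "()"] by (auto simp: Units_def ring_mat_def)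

lemma det_invertible:
  assumes A: "(A :: complex mat) \<in> carrier_mat n n" and d: "det A \<noteq> 0"
  shows "invertible_mat A"
  using det_inv_ex[OF A d] A unfolding invertible_mat_def inverts_mat_def by auto

lemma det_dg: "det (dg N f) = (\<Prod>i<N. f i)"
proof -
  have "det (dg N f) = prod_list (diag_mat (dg N f))"
    by (rule det_upper_triangular[OF _ dg_carrier]) (auto simp: upper_triangular_def dg_def)
  also have "\<dots> = (\<Prod>i<N. f i)"
    by (simp add: diag_mat_def dg_def prod.distinct_set_conv_list[symmetric] lessThan_atLeast0 cong: map_cong)
  finally show ?thesis .
qed


definition sq :: "nat \<Rightarrow> nat \<Rightarrow> real" where "sq N k = sqrt (real ((N - 1) choose k))"

lemma sq_pos: "k < N \<Longrightarrow> 0 < sq N k"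
  unfolding sq_def by simp

lemma sqrt_nat_mult:
  assumes "a * b = k^2 * c"
  shows "sqrt (real a) * sqrt (real b) = real k * sqrt (real c)"
proof -
  have "sqrt (real a) * sqrt (real b) = sqrt (real (a*b))" by (simp add: real_sqrt_mult)
  also have "\<dots> = sqrt ((real k)^2 * real c)" using assms by (simp flip: of_nat_mult of_nat_power)
  also have "\<dots> = real k * sqrt (real c)" by (simp add: real_sqrt_mult)
  finally show ?thesis .
qed

lemma key_choose:
  assumes "0 < j" "j < N"
  shows "j * ((N - 1) choose j) = (N - j) * ((N - 1) choose (j - 1))"
proof -
  have "j * ((N - 1) choose j) = (N - 1) * ((N - 1 - 1) choose (j - 1))"
    using times_binomial_minus1_eq[OF assms(1)] .
  also have "\<dots> = (N - 1 - (j - 1)) * ((N - 1) choose (j - 1))"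
    using binomial_absorb_comp[of "N - 1" "j - 1"] by simp
  also have "N - 1 - (j - 1) = N - j" using assms by simp
  finally show ?thesis .
qed

lemma a1:
  assumes "0 < j" "j < N"
  shows "sqrt (real (j * (N - j))) * sq N (j - 1) = real j * sq N j"
  unfolding sq_def
  by (rule sqrt_nat_mult) (use key_choose[OF assms] in \<open>simp add: power2_eq_square algebra_simps\<close>)

lemma a2:
  assumes "0 < j" "j < N"
  shows "sqrt (real (j * (N - j))) * sq N j = real (N - j) * sq N (j - 1)"
  unfolding sq_def
  by (rule sqrt_nat_mult) (use key_choose[OF assms] in \<open>simp add: power2_eq_square algebra_simps\<close>)

lemma rl:
  assumes "n \<le> m" "m < N"
  shows "sqrt (real ((m choose n) * ((N - 1 - n) choose (m - n)))) * sq N n = real (m choose n) * sq N m"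
  unfolding sq_def
proof (rule sqrt_nat_mult)
  have "((N - 1) choose m) * (m choose n) = ((N - 1) choose n) * ((N - 1 - n) choose (m - n))"
    using choose_mult[of n m "N - 1"] assms by simp
  thus "(m choose n) * ((N - 1 - n) choose (m - n)) * ((N - 1) choose n) = (m choose n)^2 * ((N - 1) choose m)"
    by (simp add: power2_eq_square algebra_simps)
qed


definition ccs :: "nat \<Rightarrow> nat \<Rightarrow> complex" where "ccs N k = complex_of_real (sq N k)"

lemma ccs_nz: "k < N \<Longrightarrow> ccs N k \<noteq> 0"
  using sq_pos[of k N] by (simp add: ccs_def)

lemma beta_nz: "beta \<noteq> 0" by (simp add: beta_def complex_eq_iff)

lemma dg3:
  assumes "X \<in> carrier_mat N N"
  shows "dg N f * X * dg N g = mat N N (\<lambda>(i,j). f i * X $$ (i,j) * g j)"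
proof -
  have "dg N f * X * dg N g = mat N N (\<lambda>(i,j). f i * X $$ (i,j)) * dg N g"
    using dg_mult_left[OF assms] by simp
  also have "\<dots> = mat N N (\<lambda>(i,j). mat N N (\<lambda>(i,j). f i * X $$ (i,j)) $$ (i,j) * g j)"
    by (rule dg_mult_right) simp
  also have "\<dots> = mat N N (\<lambda>(i,j). f i * X $$ (i,j) * g j)"
    by (rule eq_matI) auto
  finally show ?thesis .
qed

definition XA :: "nat \<Rightarrow> complex mat" where
  "XA N = mat N N (\<lambda>(i,j). if i = j then of_int (2 * int i - int N + 1)
     else if j = i + 1 then of_nat j * ((1 + \<i>) / 2)
     else if i = j + 1 then of_nat (N - i) * (-1 + \<i>) else 0)"

lemma XA_carrier[simp]: "XA N \<in> carrier_mat N N" by (simp add: XA_def)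

lemma c1: "(1 + \<i>) / 2 * (- beta) = 1" by (simp add: beta_def complex_eq_iff)

lemma aux_cancel:
  fixes p ci c b x cj :: complex
  assumes "p \<noteq> 0" "ci \<noteq> 0" "c * b = 1"
  shows "inverse (ci * p) * (x * c) * (cj * (b * p)) = x * cj / ci"
proof -
  have "inverse (ci * p) * (x * c) * (cj * (b * p)) = (x * cj / ci) * (c * b) * (inverse p * p)"
    by (simp add: divide_inverse mult_ac)
  thus ?thesis using assms by simp
qed

lemma HAO_L: "H_AO N = dg N (\<lambda>k. inverse (ccs N k * (-beta)^k)) * XA N * dg N (\<lambda>k. ccs N k * (-beta)^k)"
  unfolding dg3[OF XA_carrier]
proof (rule eq_matI)
  fix i j assume "i < dim_row (mat N N (\<lambda>(i, j). inverse (ccs N i * (- beta) ^ i) * XA N $$ (i, j) * (ccs N j * (- beta) ^ j)))"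
     "j < dim_col (mat N N (\<lambda>(i, j). inverse (ccs N i * (- beta) ^ i) * XA N $$ (i, j) * (ccs N j * (- beta) ^ j)))"
  hence ij: "i < N" "j < N" by auto
  have nz: "ccs N i \<noteq> 0" "ccs N j \<noteq> 0" "(-beta)^i \<noteq> 0" "(-beta)^j \<noteq> 0"
    using ccs_nz ij beta_nz by auto
  consider "i = j" | "j = i + 1" | "i = j + 1" | "i \<noteq> j" "j \<noteq> i + 1" "i \<noteq> j + 1" by blast
  then show "H_AO N $$ (i, j) = mat N N (\<lambda>(i, j). inverse (ccs N i * (- beta) ^ i) * XA N $$ (i, j) * (ccs N j * (- beta) ^ j)) $$ (i, j)"
  proof cases
    case 1
    have "inverse (ccs N i * (-beta)^i) * (ccs N i * (-beta)^i) = 1" by (rule left_inverse) (use nz in simp)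
    thus ?thesis using ij 1 by (simp add: H_AO_def XA_def mult.assoc)
  next
    case 2
    have e: "complex_of_real (sqrt (real (j * (N - j)))) * ccs N i = of_nat j * ccs N j"
      using arg_cong[OF a1[of j N], of complex_of_real] 2 ij unfolding ccs_def by simp
    have "H_AO N $$ (i, j) = complex_of_real (sqrt (real (j * (N - j))))" using ij 2 by (simp add: H_AO_def)
    also have "\<dots> = of_nat j * ccs N j / ccs N i" using e nz by (simp add: field_simps)
    also have "\<dots> = inverse (ccs N i * (- beta) ^ i) * (of_nat j * ((1 + \<i>) / 2)) * (ccs N j * ((- beta) * (- beta) ^ i))"
      by (rule aux_cancel[symmetric]) (use nz c1 in auto)
    also have "\<dots> = inverse (ccs N i * (- beta) ^ i) * (of_nat j * ((1 + \<i>) / 2)) * (ccs N j * (- beta) ^ j)"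
      using 2 by simp
    finally show ?thesis using ij 2 by (simp add: XA_def)
  next
    case 3
    have e: "complex_of_real (sqrt (real (i * (N - i)))) * ccs N i = of_nat (N - i) * ccs N j"
      using arg_cong[OF a2[of i N], of complex_of_real] 3 ij unfolding ccs_def by simp
    have "H_AO N $$ (i, j) = - complex_of_real (sqrt (real (i * (N - i))))" using ij 3 by (simp add: H_AO_def)
    also have "\<dots> = - of_nat (N - i) * ccs N j / ccs N i" using e nz by (simp add: field_simps)
    also have "\<dots> = inverse (ccs N i * (- beta) ^ i) * (of_nat (N - i) * (-1 + \<i>)) * (ccs N j * (- beta) ^ j)"
      using nz 3 by (simp add: field_simps beta_def)
    finally show ?thesis using ij 3 by (simp add: XA_def)
  next
    case 4 thus ?thesis using ij by (simp add: H_AO_def XA_def)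
  qed
qed (auto simp: H_AO_def)


lemma aux_cancel2:
  fixes p ci b x cj :: complex
  assumes "p \<noteq> 0" "ci \<noteq> 0" "b \<noteq> 0"
  shows "inverse (ci * (b * p)) * (x * b) * (cj * p) = x * cj / ci"
proof -
  have "inverse (ci * (b * p)) * (x * b) * (cj * p) = (x * cj / ci) * (inverse b * b) * (inverse p * p)"
    by (simp add: divide_inverse mult_ac)
  thus ?thesis using assms by simp
qed

lemma aux3:
  fixes p ci b x cj :: complex
  assumes "p \<noteq> 0" "cj \<noteq> 0" "b \<noteq> 0"
  shows "(p * ci) * (x * b) * inverse ((b * p) * cj) = x * ci / cj"
proof -
  have "(p * ci) * (x * b) * inverse ((b * p) * cj) = (x * ci / cj) * (inverse b * b) * (inverse p * p)"
    by (simp add: divide_inverse mult_ac)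
  thus ?thesis using assms by simp
qed

lemma aux4:
  fixes p ci b x cj :: complex
  assumes "p \<noteq> 0" "cj \<noteq> 0"
  shows "((b * p) * ci) * (x * b) * inverse (p * cj) = x * (b * b) * ci / cj"
proof -
  have "((b * p) * ci) * (x * b) * inverse (p * cj) = (x * (b * b) * ci / cj) * (inverse p * p)"
    by (simp add: divide_inverse mult_ac)
  thus ?thesis using assms by simp
qed

lemma c2: "(-1 - \<i>) / 2 * beta = 1" by (simp add: beta_def complex_eq_iff)

definition XB :: "nat \<Rightarrow> complex mat" where
  "XB N = mat N N (\<lambda>(i,j). if i = j then \<i> * of_int (2 * int i - int N + 1)
     else if j = i + 1 then of_nat j * ((-1 - \<i>) / 2)
     else if i = j + 1 then of_nat (N - i) * (-1 + \<i>) else 0)"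

lemma XB_carrier[simp]: "XB N \<in> carrier_mat N N" by (simp add: XB_def)

lemma HBH_K: "H_BH N = dg N (\<lambda>k. inverse (ccs N k * beta^k)) * XB N * dg N (\<lambda>k. ccs N k * beta^k)"
  unfolding dg3[OF XB_carrier]
proof (rule eq_matI)
  fix i j assume "i < dim_row (mat N N (\<lambda>(i, j). inverse (ccs N i * beta ^ i) * XB N $$ (i, j) * (ccs N j * beta ^ j)))"
     "j < dim_col (mat N N (\<lambda>(i, j). inverse (ccs N i * beta ^ i) * XB N $$ (i, j) * (ccs N j * beta ^ j)))"
  hence ij: "i < N" "j < N" by auto
  have nz: "ccs N i \<noteq> 0" "ccs N j \<noteq> 0" "beta^i \<noteq> 0" "beta^j \<noteq> 0"
    using ccs_nz ij beta_nz by auto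
  consider "i = j" | "j = i + 1" | "i = j + 1" | "i \<noteq> j" "j \<noteq> i + 1" "i \<noteq> j + 1" by blast
  then show "H_BH N $$ (i, j) = mat N N (\<lambda>(i, j). inverse (ccs N i * beta ^ i) * XB N $$ (i, j) * (ccs N j * beta ^ j)) $$ (i, j)"
  proof cases
    case 1
    have "inverse (ccs N i * beta^i) * (ccs N i * beta^i) = 1" by (rule left_inverse) (use nz in simp)
    thus ?thesis using ij 1 by (simp add: H_BH_def XB_def mult_ac)
  next
    case 2
    have e: "complex_of_real (sqrt (real (j * (N - j)))) * ccs N i = of_nat j * ccs N j"
      using arg_cong[OF a1[of j N], of complex_of_real] 2 ij unfolding ccs_def by simp
    have "H_BH N $$ (i, j) = complex_of_real (sqrt (real (j * (N - j))))" using ij 2 by (simp add: H_BH_def)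
    also have "\<dots> = of_nat j * ccs N j / ccs N i" using e nz by (simp add: field_simps)
    also have "\<dots> = inverse (ccs N i * beta ^ i) * (of_nat j * ((-1 - \<i>) / 2)) * (ccs N j * (beta * beta ^ i))"
      by (rule aux_cancel[symmetric]) (use nz c2 in auto)
    also have "\<dots> = inverse (ccs N i * beta ^ i) * (of_nat j * ((-1 - \<i>) / 2)) * (ccs N j * beta ^ j)"
      using 2 by simp
    finally show ?thesis using ij 2 by (simp add: XB_def)
  next
    case 3
    have e: "complex_of_real (sqrt (real (i * (N - i)))) * ccs N i = of_nat (N - i) * ccs N j"
      using arg_cong[OF a2[of i N], of complex_of_real] 3 ij unfolding ccs_def by simp
    have "H_BH N $$ (i, j) = complex_of_real (sqrt (real (i * (N - i))))" using ij 3 by (simp add: H_BH_def)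
    also have "\<dots> = of_nat (N - i) * ccs N j / ccs N i" using e nz by (simp add: field_simps)
    also have "\<dots> = inverse (ccs N i * (beta * beta ^ j)) * (of_nat (N - i) * beta) * (ccs N j * beta ^ j)"
      by (rule aux_cancel2[symmetric]) (use nz beta_nz in auto)
    also have "\<dots> = inverse (ccs N i * beta ^ i) * (of_nat (N - i) * (-1 + \<i>)) * (ccs N j * beta ^ j)"
      using 3 by (simp add: beta_def)
    finally show ?thesis using ij 3 by (simp add: XB_def)
  next
    case 4 thus ?thesis using ij by (simp add: H_BH_def XB_def)
  qed
qed (auto simp: H_BH_def)

definition YB :: "nat \<Rightarrow> complex mat" where
  "YB N = mat N N (\<lambda>(i,j). if i = j then \<i> * of_int (2 * int i - int N + 1)
     else if j = i + 1 then of_nat (N - j) * \<i>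
     else if i = j + 1 then - of_nat i * \<i> else 0)"

lemma YB_carrier[simp]: "YB N \<in> carrier_mat N N" by (simp add: YB_def)

lemma HBH_K2: "H_BH N = dg N (\<lambda>k. \<i>^k * ccs N k) * YB N * dg N (\<lambda>k. inverse (\<i>^k * ccs N k))"
  unfolding dg3[OF YB_carrier]
proof (rule eq_matI)
  fix i j assume "i < dim_row (mat N N (\<lambda>(i, j). \<i>^i * ccs N i * YB N $$ (i, j) * inverse (\<i>^j * ccs N j)))"
     "j < dim_col (mat N N (\<lambda>(i, j). \<i>^i * ccs N i * YB N $$ (i, j) * inverse (\<i>^j * ccs N j)))"
  hence ij: "i < N" "j < N" by auto
  have nz: "ccs N i \<noteq> 0" "ccs N j \<noteq> 0" "\<i>^i \<noteq> 0" "\<i>^j \<noteq> 0"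
    using ccs_nz ij by auto
  consider "i = j" | "j = i + 1" | "i = j + 1" | "i \<noteq> j" "j \<noteq> i + 1" "i \<noteq> j + 1" by blast
  then show "H_BH N $$ (i, j) = mat N N (\<lambda>(i, j). \<i>^i * ccs N i * YB N $$ (i, j) * inverse (\<i>^j * ccs N j)) $$ (i, j)"
  proof cases
    case 1
    have "(\<i>^i * ccs N i) * inverse (\<i>^i * ccs N i) = 1" by (rule right_inverse) (use nz in simp)
    thus ?thesis using ij 1 by (simp add: H_BH_def YB_def mult_ac)
  next
    case 2
    have e: "complex_of_real (sqrt (real (j * (N - j)))) * ccs N j = of_nat (N - j) * ccs N i"
      using arg_cong[OF a2[of j N], of complex_of_real] 2 ij unfolding ccs_def by simp
    have "H_BH N $$ (i, j) = complex_of_real (sqrt (real (j * (N - j))))" using ij 2 by (simp add: H_BH_def)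
    also have "\<dots> = of_nat (N - j) * ccs N i / ccs N j" using e nz by (simp add: field_simps)
    also have "\<dots> = (\<i>^i * ccs N i) * (of_nat (N - j) * \<i>) * inverse ((\<i> * \<i>^i) * ccs N j)"
      by (rule aux3[symmetric]) (use nz in auto)
    also have "\<dots> = \<i>^i * ccs N i * (of_nat (N - j) * \<i>) * inverse (\<i>^j * ccs N j)"
      using 2 by simp
    finally show ?thesis using ij 2 by (simp add: YB_def)
  next
    case 3
    have e: "complex_of_real (sqrt (real (i * (N - i)))) * ccs N j = of_nat i * ccs N i"
      using arg_cong[OF a1[of i N], of complex_of_real] 3 ij unfolding ccs_def by simp
    have "H_BH N $$ (i, j) = complex_of_real (sqrt (real (i * (N - i))))" using ij 3 by (simp add: H_BH_def)
    also have "\<dots> = (- of_nat i) * (\<i> * \<i>) * ccs N i / ccs N j" using e nz by (simp add: field_simps)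
    also have "\<dots> = ((\<i> * \<i>^j) * ccs N i) * (- of_nat i * \<i>) * inverse (\<i>^j * ccs N j)"
      by (rule aux4[symmetric]) (use nz in auto)
    also have "\<dots> = \<i>^i * ccs N i * (- of_nat i * \<i>) * inverse (\<i>^j * ccs N j)"
      using 3 by simp
    finally show ?thesis using ij 3 by (simp add: YB_def)
  next
    case 4 thus ?thesis using ij by (simp add: H_BH_def YB_def)
  qed
qed (auto simp: H_BH_def)

definition YA :: "nat \<Rightarrow> complex mat" where
  "YA N = mat N N (\<lambda>(i,j). if i = j then of_int (2 * int i - int N + 1)
     else if j = i + 1 then of_nat (N - j)
     else if i = j + 1 then - of_nat i else 0)"

lemma YA_carrier[simp]: "YA N \<in> carrier_mat N N" by (simp add: YA_def)

lemma HAO_E: "H_AO N = dg N (ccs N) * YA N * dg N (\<lambda>k. inverse (ccs N k))"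
  unfolding dg3[OF YA_carrier]
proof (rule eq_matI)
  fix i j assume "i < dim_row (mat N N (\<lambda>(i, j). ccs N i * YA N $$ (i, j) * inverse (ccs N j)))"
     "j < dim_col (mat N N (\<lambda>(i, j). ccs N i * YA N $$ (i, j) * inverse (ccs N j)))"
  hence ij: "i < N" "j < N" by auto
  have nz: "ccs N i \<noteq> 0" "ccs N j \<noteq> 0"
    using ccs_nz ij by auto
  consider "i = j" | "j = i + 1" | "i = j + 1" | "i \<noteq> j" "j \<noteq> i + 1" "i \<noteq> j + 1" by blast
  then show "H_AO N $$ (i, j) = mat N N (\<lambda>(i, j). ccs N i * YA N $$ (i, j) * inverse (ccs N j)) $$ (i, j)"
  proof cases
    case 1
    have "ccs N i * inverse (ccs N i) = 1" by (rule right_inverse) (use nz in simp)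
    thus ?thesis using ij 1 by (simp add: H_AO_def YA_def mult_ac)
  next
    case 2
    have e: "complex_of_real (sqrt (real (j * (N - j)))) * ccs N j = of_nat (N - j) * ccs N i"
      using arg_cong[OF a2[of j N], of complex_of_real] 2 ij unfolding ccs_def by simp
    have "H_AO N $$ (i, j) = complex_of_real (sqrt (real (j * (N - j))))" using ij 2 by (simp add: H_AO_def)
    also have "\<dots> = ccs N i * of_nat (N - j) * inverse (ccs N j)" using e nz by (simp add: field_simps)
    finally show ?thesis using ij 2 by (simp add: YA_def)
  next
    case 3
    have e: "complex_of_real (sqrt (real (i * (N - i)))) * ccs N j = of_nat i * ccs N i"
      using arg_cong[OF a1[of i N], of complex_of_real] 3 ij unfolding ccs_def by simp
    have "H_AO N $$ (i, j) = - complex_of_real (sqrt (real (i * (N - i))))" using ij 3 by (simp add: H_AO_def)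
    also have "\<dots> = ccs N i * (- of_nat i) * inverse (ccs N j)" using e nz by (simp add: field_simps)
    finally show ?thesis using ij 3 by (simp add: YA_def)
  next
    case 4 thus ?thesis using ij by (simp add: H_AO_def YA_def)
  qed
qed (auto simp: H_AO_def)

definition Pt :: "nat \<Rightarrow> complex mat" where
  "Pt N = mat N N (\<lambda>(i,j). of_nat (j choose i))"

lemma Pt_carrier[simp]: "Pt N \<in> carrier_mat N N" by (simp add: Pt_def)

lemma B_dg: "B_mat N = dg N (\<lambda>i. inverse ((- beta) ^ i))" by (simp add: B_mat_def dg_def)
lemma A_dg: "A_mat N = dg N (\<lambda>i. beta ^ i)" by (simp add: A_mat_def dg_def)
lemma R_carrier[simp]: "R_mat N \<in> carrier_mat N N" by (simp add: R_mat_def)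

lemma S_entries: "S_mat N = mat N N (\<lambda>(i,j). inverse ((- beta) ^ i) * R_mat N $$ (i,j) * beta ^ j)"
  unfolding S_mat_def B_dg A_dg dg3[OF R_carrier] ..

lemma S_dec: "S_mat N = dg N (\<lambda>k. inverse (ccs N k * (-beta)^k)) * Pt N * dg N (\<lambda>k. ccs N k * beta^k)"
  unfolding dg3[OF Pt_carrier] S_entries
proof (rule eq_matI)
  fix i j assume "i < dim_row (mat N N (\<lambda>(i, j). inverse (ccs N i * (- beta) ^ i) * Pt N $$ (i, j) * (ccs N j * beta ^ j)))"
     "j < dim_col (mat N N (\<lambda>(i, j). inverse (ccs N i * (- beta) ^ i) * Pt N $$ (i, j) * (ccs N j * beta ^ j)))"
  hence ij: "i < N" "j < N" by auto
  have nz: "ccs N i \<noteq> 0" "(-beta)^i \<noteq> 0"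
    using ccs_nz ij beta_nz by auto
  show "mat N N (\<lambda>(i, j). inverse ((- beta) ^ i) * R_mat N $$ (i, j) * beta ^ j) $$ (i, j) =
         mat N N (\<lambda>(i, j). inverse (ccs N i * (- beta) ^ i) * Pt N $$ (i, j) * (ccs N j * beta ^ j)) $$ (i, j)"
  proof (cases "i \<le> j")
    case True
    have e: "complex_of_real (sqrt (real ((j choose i) * ((N - 1 - i) choose (j - i))))) * ccs N i = of_nat (j choose i) * ccs N j"
      using arg_cong[OF rl[OF True ij(2)], of complex_of_real] unfolding ccs_def by simp
    have r: "R_mat N $$ (i,j) = of_nat (j choose i) * ccs N j / ccs N i"
      using ij True e nz by (simp add: R_mat_def field_simps)
    show ?thesis using ij nz by (simp add: r Pt_def field_simps)
  next
    case False
    thus ?thesis using ij by (simp add: R_mat_def Pt_def)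
  qed
qed auto


lemma tri_left:
  fixes A X :: "complex mat"
  assumes A: "A \<in> carrier_mat N N" and X: "X \<in> carrier_mat N N" and nm: "n < N" "m < N"
    and tri: "\<And>k l. k < N \<Longrightarrow> l < N \<Longrightarrow> k \<noteq> l \<Longrightarrow> k + 1 \<noteq> l \<Longrightarrow> k \<noteq> l + 1 \<Longrightarrow> A $$ (k,l) = 0"
  shows "(A * X) $$ (n,m) = (if 0 < n then A $$ (n,n-1) * X $$ (n-1,m) else 0) + A $$ (n,n) * X $$ (n,m)
     + (if n + 1 < N then A $$ (n,n+1) * X $$ (n+1,m) else 0)"
  unfolding mult_mat_entry[OF A X nm]
  by (rule sum3[where f="\<lambda>l. A $$ (n,l) * X $$ (l,m)", OF nm(1)]) (use tri nm in auto)

lemma tri_right: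
  fixes A X :: "complex mat"
  assumes A: "A \<in> carrier_mat N N" and X: "X \<in> carrier_mat N N" and nm: "n < N" "m < N"
    and tri: "\<And>k l. k < N \<Longrightarrow> l < N \<Longrightarrow> k \<noteq> l \<Longrightarrow> k + 1 \<noteq> l \<Longrightarrow> k \<noteq> l + 1 \<Longrightarrow> A $$ (k,l) = 0"
  shows "(X * A) $$ (n,m) = (if 0 < m then X $$ (n,m-1) * A $$ (m-1,m) else 0) + X $$ (n,m) * A $$ (m,m)
     + (if m + 1 < N then X $$ (n,m+1) * A $$ (m+1,m) else 0)"
  unfolding mult_mat_entry[OF X A nm]
  by (rule sum3[where f="\<lambda>l. X $$ (n,l) * A $$ (l,m)", OF nm(2)]) (use tri nm in auto)


lemma F1: "(of_nat (n+1) :: complex) * of_nat (m choose (n+1)) = (of_nat m - of_nat n) * of_nat (m choose n)"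
proof (cases "n \<le> m")
  case True
  have "(n+1) * (m choose (n+1)) = (m - n) * (m choose n)"
    using binomial_absorption[of n m] binomial_absorb_comp[of m n] by simp
  hence "(of_nat ((n+1) * (m choose (n+1))) :: complex) = of_nat ((m - n) * (m choose n))" by simp
  thus ?thesis using True by (simp add: of_nat_diff algebra_simps)
next
  case False thus ?thesis by (simp add: binomial_eq_0)
qed

lemma F2: "(of_nat m :: complex) * of_nat ((m - 1) choose n) = (of_nat m - of_nat n) * of_nat (m choose n)"
proof (cases "n \<le> m")
  case True
  have "m * ((m - 1) choose n) = (m - n) * (m choose n)"
    using binomial_absorb_comp[of m n] by simp
  hence "(of_nat (m * ((m - 1) choose n)) :: complex) = of_nat ((m - n) * (m choose n))" by simp
  thus ?thesis using True by (simp add: of_nat_diff)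
next
  case False thus ?thesis by (simp add: binomial_eq_0)
qed

lemma F3: "0 < n \<Longrightarrow> (of_nat ((m+1) choose n) :: complex) = of_nat (m choose n) + of_nat (m choose (n - 1))"
  by (cases n) simp_all

lemma F4:
  assumes "0 < n"
  shows "(of_nat n :: complex) * of_nat (m choose n) = (of_nat m + 1 - of_nat n) * of_nat (m choose (n - 1))"
proof (cases "n \<le> m + 1")
  case True
  have "n * (m choose n) = (m - (n - 1)) * (m choose (n - 1))"
    using times_binomial_minus1_eq[OF assms, of m] binomial_absorb_comp[of m "n - 1"] by simp
  hence "(of_nat (n * (m choose n)) :: complex) = of_nat ((m - (n - 1)) * (m choose (n - 1)))" by simp
  thus ?thesis using True assms by (simp add: of_nat_diff)
next
  case False thus ?thesis by (simp add: binomial_eq_0)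
qed


lemma T1_core0:
  fixes x y a1 a2 N n m :: complex
  assumes "(n+1)*a1 = (m-n)*y" "m*a2 = (m-n)*y" "n*y = (m+1-n)*x"
  shows "(N-n)*(-1+\<i>)*x + (2*n-N+1)*y + (n+1)*((1+\<i>)/2)*a1 = a2*(m*((-1-\<i>)/2)) + y*(\<i>*(2*m-N+1)) + (y+x)*((N-m-1)*(-1+\<i>))"
proof -
  have "((N-n)*(-1+\<i>)*x + (2*n-N+1)*y + (n+1)*((1+\<i>)/2)*a1) - (a2*(m*((-1-\<i>)/2)) + y*(\<i>*(2*m-N+1)) + (y+x)*((N-m-1)*(-1+\<i>)))
     = (\<i>-1)*((m+1-n)*x - n*y) + (1+\<i>)/2*((n+1)*a1 - (m-n)*y) + (1+\<i>)/2*(m*a2 - (m-n)*y)"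
    by (simp add: field_simps)
  also have "\<dots> = 0" using assms by simp
  finally show ?thesis by simp
qed

lemma T1_alg:
  assumes nm: "n < N" "m < N"
  shows "(if 0 < n then of_nat (N - n) * (-1 + \<i>) * of_nat (m choose (n - 1)) else 0)
     + of_int (2 * int n - int N + 1) * of_nat (m choose n)
     + (if n + 1 < N then of_nat (n + 1) * ((1 + \<i>) / 2) * of_nat (m choose (n + 1)) else 0)
   = (if 0 < m then of_nat ((m - 1) choose n) * (of_nat m * ((-1 - \<i>) / 2)) else 0)
     + of_nat (m choose n) * (\<i> * of_int (2 * int m - int N + 1))
     + (if m + 1 < N then of_nat ((m + 1) choose n) * (of_nat (N - (m + 1)) * (-1 + \<i>)) else (0::complex))"
proof -
  have e1: "(if n + 1 < N then of_nat (n + 1) * ((1 + \<i>) / 2) * of_nat (m choose (n + 1)) else 0)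
      = of_nat (n + 1) * ((1 + \<i>) / 2) * (of_nat (m choose (n + 1)) :: complex)"
    using nm by auto
  have e2: "(if 0 < m then of_nat ((m - 1) choose n) * (of_nat m * ((-1 - \<i>) / 2)) else 0)
      = of_nat ((m - 1) choose n) * (of_nat m * ((-1 - \<i>) / (2::complex)))"
    by auto
  have e3: "(if m + 1 < N then of_nat ((m + 1) choose n) * (of_nat (N - (m + 1)) * (-1 + \<i>)) else 0)
      = of_nat ((m + 1) choose n) * ((of_nat N - of_nat m - 1) * (-1 + \<i>) :: complex)"
  proof (cases "m + 1 < N")
    case True thus ?thesis by (simp add: of_nat_diff)
  next
    case False hence "N = m + 1" using nm by simp
    thus ?thesis by simp
  qed
  note f1 = F1[of n m] and f2 = F2[of m n]
  show ?thesis
  proof (cases "n = 0")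
    case True
    have "(of_nat (m choose 1) :: complex) = of_nat m" by simp
    thus ?thesis unfolding e1 e2 e3 using True by (simp add: field_simps)
  next
    case False
    hence n0: "0 < n" by simp
    note f3 = F3[OF n0, of m] and f4 = F4[OF n0, of m]
    have Nn: "(of_nat (N - n) :: complex) = of_nat N - of_nat n" using nm by (simp add: of_nat_diff)
    have c1: "(of_int (2 * int n - int N + 1) :: complex) = 2 * of_nat n - of_nat N + 1" by simp
    have c2: "(of_int (2 * int m - int N + 1) :: complex) = 2 * of_nat m - of_nat N + 1" by simp
    have c3: "(of_nat (n + 1) :: complex) = of_nat n + 1" by simp
    have f1': "(of_nat n + 1) * of_nat (m choose (n+1)) = (of_nat m - of_nat n) * (of_nat (m choose n) :: complex)"
      using f1 by (simp add: algebra_simps)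
    have e0: "(if 0 < n then of_nat (N - n) * (-1 + \<i>) * of_nat (m choose (n - 1)) else 0)
       = of_nat (N - n) * (-1 + \<i>) * (of_nat (m choose (n - 1)) :: complex)" using n0 by simp
    show ?thesis unfolding e0 e1 e2 e3
      unfolding f3 Nn c1 c2 c3 by (rule T1_core0[OF f1' f2 f4])
  qed
qed

lemma XA_tri: "k < N \<Longrightarrow> l < N \<Longrightarrow> k \<noteq> l \<Longrightarrow> k + 1 \<noteq> l \<Longrightarrow> k \<noteq> l + 1 \<Longrightarrow> XA N $$ (k,l) = 0"
  by (simp add: XA_def)
lemma XB_tri: "k < N \<Longrightarrow> l < N \<Longrightarrow> k \<noteq> l \<Longrightarrow> k + 1 \<noteq> l \<Longrightarrow> k \<noteq> l + 1 \<Longrightarrow> XB N $$ (k,l) = 0"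
  by (simp add: XB_def)
lemma YA_tri: "k < N \<Longrightarrow> l < N \<Longrightarrow> k \<noteq> l \<Longrightarrow> k + 1 \<noteq> l \<Longrightarrow> k \<noteq> l + 1 \<Longrightarrow> YA N $$ (k,l) = 0"
  by (simp add: YA_def)
lemma YB_tri: "k < N \<Longrightarrow> l < N \<Longrightarrow> k \<noteq> l \<Longrightarrow> k + 1 \<noteq> l \<Longrightarrow> k \<noteq> l + 1 \<Longrightarrow> YB N $$ (k,l) = 0"
  by (simp add: YB_def)

lemma XA_e1: "0 < n \<Longrightarrow> n < N \<Longrightarrow> XA N $$ (n,n-1) = of_nat (N - n) * (-1 + \<i>)"
  by (cases n) (auto simp: XA_def)
lemma XA_e2: "n < N \<Longrightarrow> XA N $$ (n,n) = of_int (2 * int n - int N + 1)"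
  by (auto simp: XA_def)
lemma XA_e3: "n + 1 < N \<Longrightarrow> XA N $$ (n,n+1) = of_nat (n + 1) * ((1 + \<i>) / 2)"
  by (auto simp: XA_def)
lemma XB_e1: "0 < m \<Longrightarrow> m < N \<Longrightarrow> XB N $$ (m-1,m) = of_nat m * ((-1 - \<i>) / 2)"
  by (cases m) (auto simp: XB_def)
lemma XB_e2: "m < N \<Longrightarrow> XB N $$ (m,m) = \<i> * of_int (2 * int m - int N + 1)"
  by (auto simp: XB_def)
lemma XB_e3: "m + 1 < N \<Longrightarrow> XB N $$ (m+1,m) = of_nat (N - (m + 1)) * (-1 + \<i>)"
  by (auto simp: XB_def)
lemma XA_e1': "0 < n \<Longrightarrow> n < N \<Longrightarrow> XA N $$ (n,n - Suc 0) = of_nat (N - n) * (-1 + \<i>)"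
  using XA_e1 by simp
lemma XA_e3': "Suc n < N \<Longrightarrow> XA N $$ (n,Suc n) = of_nat (n + 1) * ((1 + \<i>) / 2)"
  using XA_e3 by simp
lemma XB_e1': "0 < m \<Longrightarrow> m < N \<Longrightarrow> XB N $$ (m - Suc 0,m) = of_nat m * ((-1 - \<i>) / 2)"
  using XB_e1 by simp
lemma XB_e3': "Suc m < N \<Longrightarrow> XB N $$ (Suc m,m) = of_nat (N - (m + 1)) * (-1 + \<i>)"
  using XB_e3 by simp
lemma Pt_e: "i < N \<Longrightarrow> j < N \<Longrightarrow> Pt N $$ (i,j) = of_nat (j choose i)"
  by (simp add: Pt_def)

lemma T1: "XA N * Pt N = Pt N * XB N"
proof (rule eq_matI)
  fix n m assume "n < dim_row (Pt N * XB N)" "m < dim_col (Pt N * XB N)"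
  hence nm: "n < N" "m < N" by (auto simp: Pt_def XB_def)
  have "(XA N * Pt N) $$ (n, m) = (if 0 < n then XA N $$ (n,n-1) * Pt N $$ (n-1,m) else 0) + XA N $$ (n,n) * Pt N $$ (n,m)
     + (if n + 1 < N then XA N $$ (n,n+1) * Pt N $$ (n+1,m) else 0)"
    by (rule tri_left[OF XA_carrier Pt_carrier nm XA_tri])
  also have "\<dots> = (if 0 < n then of_nat (N - n) * (-1 + \<i>) * of_nat (m choose (n - 1)) else 0)
     + of_int (2 * int n - int N + 1) * of_nat (m choose n)
     + (if n + 1 < N then of_nat (n + 1) * ((1 + \<i>) / 2) * of_nat (m choose (n + 1)) else 0)"
    using nm by (simp add: XA_e1 XA_e2 XA_e3 XA_e1' XA_e3' Pt_e cong: if_cong)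
  also have "\<dots> = (if 0 < m then of_nat ((m - 1) choose n) * (of_nat m * ((-1 - \<i>) / 2)) else 0)
     + of_nat (m choose n) * (\<i> * of_int (2 * int m - int N + 1))
     + (if m + 1 < N then of_nat ((m + 1) choose n) * (of_nat (N - (m + 1)) * (-1 + \<i>)) else (0::complex))"
    by (rule T1_alg[OF nm])
  also have "\<dots> = (if 0 < m then Pt N $$ (n,m-1) * XB N $$ (m-1,m) else 0) + Pt N $$ (n,m) * XB N $$ (m,m)
     + (if m + 1 < N then Pt N $$ (n,m+1) * XB N $$ (m+1,m) else 0)"
    using nm by (simp add: XB_e1 XB_e2 XB_e3 XB_e1' XB_e3' Pt_e cong: if_cong)
  also have "\<dots> = (Pt N * XB N) $$ (n, m)"
    by (rule tri_right[OF XB_carrier Pt_carrier nm XB_tri, symmetric])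
  finally show "(XA N * Pt N) $$ (n, m) = (Pt N * XB N) $$ (n, m)" .
qed (auto simp: XA_def Pt_def XB_def)


lemma K_core0:
  fixes x y b n t q :: complex
  assumes "t*b = (t-q)*y" "q*y = (t+1-q)*x"
  shows "-n*(y+x) + (2*n-(n+t+1)+1)*y + t*b = -((n+t+1)-q)*x"
proof -
  have "(-n*(y+x) + (2*n-(n+t+1)+1)*y + t*b) - (-((n+t+1)-q)*x) = (t*b - (t-q)*y) - (q*y - (t+1-q)*x)"
    by (simp add: algebra_simps)
  also have "\<dots> = 0" using assms by simp
  finally show ?thesis by simp
qed

lemma K_core:
  fixes n t q N :: nat
  assumes N: "N = n + t + 1"
  shows "-(of_nat n) * of_nat ((t+1) choose q) + of_int (2 * int n - int N + 1) * of_nat (t choose q)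
     + of_nat t * of_nat ((t-1) choose q)
     = (if 0 < q then -(of_nat N - of_nat q) * of_nat (t choose (q-1)) else (0::complex))"
proof (cases "q = 0")
  case True thus ?thesis using N by (simp add: algebra_simps)
next
  case False
  hence q0: "0 < q" by simp
  have e: "(of_int (2 * int n - int N + 1) :: complex) = 2 * of_nat n - (of_nat n + of_nat t + 1) + 1"
    "(of_nat N :: complex) = of_nat n + of_nat t + 1" using N by simp_all
  show ?thesis using q0 unfolding F3[OF q0, of t] e
    using K_core0[OF F2[of t q] F4[OF q0, of t], of "of_nat n"] by simp
qed

lemma T23_alg:
  fixes c G Gm :: complex
  assumes n: "n < N" and qN: "q < N" and Gm: "0 < q \<Longrightarrow> Gm = - c * of_nat (N - q) * G"
  shows "(if 0 < n then (- of_nat n * c) * (of_nat ((N - 1 - (n - 1)) choose q) * G) else 0)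
     + (c * of_int (2 * int n - int N + 1)) * (of_nat ((N - 1 - n) choose q) * G)
     + (if n + 1 < N then (of_nat (N - (n + 1)) * c) * (of_nat ((N - 1 - (n + 1)) choose q) * G) else 0)
     = (if 0 < q then of_nat ((N - 1 - n) choose (q - 1)) * Gm else 0)"
proof -
  define t where "t = N - 1 - n"
  have N: "N = n + t + 1" using n unfolding t_def by simp
  have i1: "(if 0 < n then (- of_nat n * c) * (of_nat ((N - 1 - (n - 1)) choose q) * G) else 0)
     = (- of_nat n * c) * (of_nat ((t + 1) choose q) * G)"
  proof (cases "n = 0")
    case False thus ?thesis using N by (simp add: Suc_diff_Suc)
  qed simp
  have i3: "(if n + 1 < N then (of_nat (N - (n + 1)) * c) * (of_nat ((N - 1 - (n + 1)) choose q) * G) else 0)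
     = (of_nat t * c) * (of_nat ((t - 1) choose q) * G)"
  proof (cases "n + 1 < N")
    case True
    have "N - (n + 1) = t" "N - 1 - (n + 1) = t - 1" using N by simp_all
    thus ?thesis using True by simp
  next
    case False hence "t = 0" using N by simp
    thus ?thesis using False by simp
  qed
  have i2: "N - 1 - n = t" using N by simp
  have "(- of_nat n * c) * (of_nat ((t + 1) choose q) * G) + (c * of_int (2 * int n - int N + 1)) * (of_nat (t choose q) * G)
      + (of_nat t * c) * (of_nat ((t - 1) choose q) * G)
     = c * G * (-(of_nat n) * of_nat ((t+1) choose q) + of_int (2 * int n - int N + 1) * of_nat (t choose q)
     + of_nat t * of_nat ((t-1) choose q))"
    by (simp add: algebra_simps)
  also have "\<dots> = c * G * (if 0 < q then -(of_nat N - of_nat q) * of_nat (t choose (q-1)) else (0::complex))"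
    unfolding K_core[OF N] ..
  also have "\<dots> = (if 0 < q then of_nat (t choose (q - 1)) * Gm else 0)"
  proof (cases "0 < q")
    case True
    have g: "Gm = - c * of_nat (N - q) * G" by (rule Gm[OF True])
    have nq': "(of_nat (N - q) :: complex) = of_nat N - of_nat q" using qN by (simp add: of_nat_diff)
    show ?thesis using True unfolding g nq' by (simp add: algebra_simps)
  qed simp
  finally show ?thesis unfolding i1 i2 i3 .
qed

definition J :: "nat \<Rightarrow> complex mat" where
  "J N = mat N N (\<lambda>(i,j). if j = i + 1 then 1 else 0)"

lemma J_carrier[simp]: "J N \<in> carrier_mat N N" by (simp add: J_def)

lemma J_right:
  assumes X: "X \<in> carrier_mat N N" and nq: "n < N" "q < N"
  shows "(X * J N) $$ (n,q) = (if 0 < q then X $$ (n,q-1) else 0)"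
proof -
  have "(X * J N) $$ (n,q) = (\<Sum>l<N. X $$ (n,l) * J N $$ (l,q))"
    using mult_mat_entry[OF X J_carrier nq] .
  also have "\<dots> = (\<Sum>l<N. if l = q - 1 \<and> 0 < q then X $$ (n,q-1) else 0)"
    by (rule sum.cong) (use nq in \<open>auto simp: J_def\<close>)
  also have "\<dots> = (if 0 < q then X $$ (n,q-1) else 0)"
    using nq by (cases "0 < q") (simp_all add: sum.delta)
  finally show ?thesis .
qed

definition gg :: "nat \<Rightarrow> nat \<Rightarrow> complex" where
  "gg N j = (- \<i>) ^ (N - j - 1) * of_nat (fact (N - 1 - j))"
definition ff :: "nat \<Rightarrow> nat \<Rightarrow> complex" where
  "ff N j = (- 1) ^ (N - j - 1) * of_nat (fact (N - 1 - j))"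

lemma gg_step: "0 < q \<Longrightarrow> q < N \<Longrightarrow> gg N (q - 1) = - \<i> * of_nat (N - q) * gg N q"
proof -
  assume q: "0 < q" "q < N"
  obtain k where k: "N - q = Suc k" using q by (metis Suc_diff_Suc zero_less_diff)
  have "N - (q - 1) - 1 = Suc k" "N - 1 - (q - 1) = Suc k" "N - q - 1 = k" "N - 1 - q = k" using k q by auto
  thus ?thesis unfolding gg_def k by (simp add: algebra_simps)
qed

lemma ff_step: "0 < q \<Longrightarrow> q < N \<Longrightarrow> ff N (q - 1) = - 1 * of_nat (N - q) * ff N q"
proof -
  assume q: "0 < q" "q < N"
  obtain k where k: "N - q = Suc k" using q by (metis Suc_diff_Suc zero_less_diff)
  have "N - (q - 1) - 1 = Suc k" "N - 1 - (q - 1) = Suc k" "N - q - 1 = k" "N - 1 - q = k" using k q by auto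
  thus ?thesis unfolding ff_def k by (simp add: algebra_simps)
qed

definition PG :: "nat \<Rightarrow> complex mat" where
  "PG N = mat N N (\<lambda>(i,j). of_nat ((N - 1 - i) choose j) * gg N j)"
definition PF :: "nat \<Rightarrow> complex mat" where
  "PF N = mat N N (\<lambda>(i,j). of_nat ((N - 1 - i) choose j) * ff N j)"

lemma PG_carrier[simp]: "PG N \<in> carrier_mat N N" by (simp add: PG_def)
lemma PF_carrier[simp]: "PF N \<in> carrier_mat N N" by (simp add: PF_def)
lemma P_carrier[simp]: "P_mat N \<in> carrier_mat N N" by (simp add: P_mat_def)
lemma G_carrier[simp]: "G_mat N \<in> carrier_mat N N" by (simp add: G_mat_def)
lemma F_carrier[simp]: "F_mat N \<in> carrier_mat N N" by (simp add: F_mat_def)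
lemma D_carrier[simp]: "D_mat N \<in> carrier_mat N N" by (simp add: D_mat_def)
lemma C_carrier[simp]: "C_mat N \<in> carrier_mat N N" by (simp add: C_mat_def)

lemma PG_eq: "P_mat N * G_mat N = PG N"
proof -
  have "G_mat N = dg N (gg N)" by (rule eq_matI) (auto simp: G_mat_def dg_def gg_def)
  hence "P_mat N * G_mat N = mat N N (\<lambda>(i,j). P_mat N $$ (i,j) * gg N j)"
    using dg_mult_right[OF P_carrier] by simp
  also have "\<dots> = PG N" by (rule eq_matI) (auto simp: P_mat_def PG_def)
  finally show ?thesis .
qed

lemma PF_eq: "P_mat N * F_mat N = PF N"
proof -
  have "F_mat N = dg N (ff N)" by (rule eq_matI) (auto simp: F_mat_def dg_def ff_def)
  hence "P_mat N * F_mat N = mat N N (\<lambda>(i,j). P_mat N $$ (i,j) * ff N j)"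
    using dg_mult_right[OF P_carrier] by simp
  also have "\<dots> = PF N" by (rule eq_matI) (auto simp: P_mat_def PF_def)
  finally show ?thesis .
qed

lemma QBH_dec: "Q_BH N = dg N (\<lambda>k. \<i>^k * ccs N k) * PG N"
proof -
  have "D_mat N = dg N (\<lambda>k. \<i>^k * ccs N k)" by (rule eq_matI) (auto simp: D_mat_def dg_def ccs_def sq_def)
  moreover have "Q_BH N = D_mat N * (P_mat N * G_mat N)"
    unfolding Q_BH_def by (rule assoc_mult_mat[of _ N N _ N _ N]) auto
  ultimately show ?thesis unfolding PG_eq by simp
qed

lemma QAO_dec: "Q_AO N = dg N (ccs N) * PF N"
proof -
  have "C_mat N = dg N (ccs N)" by (rule eq_matI) (auto simp: C_mat_def dg_def ccs_def sq_def)
  moreover have "Q_AO N = C_mat N * (P_mat N * F_mat N)"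
    unfolding Q_AO_def by (rule assoc_mult_mat[of _ N N _ N _ N]) auto
  ultimately show ?thesis unfolding PF_eq by simp
qed

lemma YB_e1: "0 < n \<Longrightarrow> n < N \<Longrightarrow> YB N $$ (n,n-1) = - of_nat n * \<i>"
  by (cases n) (auto simp: YB_def)
lemma YB_e1': "0 < n \<Longrightarrow> n < N \<Longrightarrow> YB N $$ (n,n - Suc 0) = - of_nat n * \<i>"
  using YB_e1 by simp
lemma YB_e2: "n < N \<Longrightarrow> YB N $$ (n,n) = \<i> * of_int (2 * int n - int N + 1)"
  by (auto simp: YB_def)
lemma YB_e3: "n + 1 < N \<Longrightarrow> YB N $$ (n,n+1) = of_nat (N - (n + 1)) * \<i>"
  by (auto simp: YB_def)
lemma YB_e3': "Suc n < N \<Longrightarrow> YB N $$ (n,Suc n) = of_nat (N - (n + 1)) * \<i>"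
  using YB_e3 by simp
lemma YA_e1: "0 < n \<Longrightarrow> n < N \<Longrightarrow> YA N $$ (n,n-1) = - of_nat n"
  by (cases n) (auto simp: YA_def)
lemma YA_e1': "0 < n \<Longrightarrow> n < N \<Longrightarrow> YA N $$ (n,n - Suc 0) = - of_nat n"
  using YA_e1 by simp
lemma YA_e2: "n < N \<Longrightarrow> YA N $$ (n,n) = of_int (2 * int n - int N + 1)"
  by (auto simp: YA_def)
lemma YA_e3: "n + 1 < N \<Longrightarrow> YA N $$ (n,n+1) = of_nat (N - (n + 1))"
  by (auto simp: YA_def)
lemma YA_e3': "Suc n < N \<Longrightarrow> YA N $$ (n,Suc n) = of_nat (N - (n + 1))"
  using YA_e3 by simp
lemma PG_e: "i < N \<Longrightarrow> j < N \<Longrightarrow> PG N $$ (i,j) = of_nat ((N - 1 - i) choose j) * gg N j"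
  by (simp add: PG_def)
lemma PF_e: "i < N \<Longrightarrow> j < N \<Longrightarrow> PF N $$ (i,j) = of_nat ((N - 1 - i) choose j) * ff N j"
  by (simp add: PF_def)

lemma T2: "YB N * PG N = PG N * J N"
proof (rule eq_matI)
  fix n q assume "n < dim_row (PG N * J N)" "q < dim_col (PG N * J N)"
  hence nq: "n < N" "q < N" by (auto simp: PG_def J_def)
  have "(YB N * PG N) $$ (n, q) = (if 0 < n then YB N $$ (n,n-1) * PG N $$ (n-1,q) else 0) + YB N $$ (n,n) * PG N $$ (n,q)
     + (if n + 1 < N then YB N $$ (n,n+1) * PG N $$ (n+1,q) else 0)"
    by (rule tri_left[OF YB_carrier PG_carrier nq YB_tri])
  also have "\<dots> = (if 0 < n then (- of_nat n * \<i>) * (of_nat ((N - 1 - (n - 1)) choose q) * gg N q) else 0)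
     + (\<i> * of_int (2 * int n - int N + 1)) * (of_nat ((N - 1 - n) choose q) * gg N q)
     + (if n + 1 < N then (of_nat (N - (n + 1)) * \<i>) * (of_nat ((N - 1 - (n + 1)) choose q) * gg N q) else 0)"
    using nq by (simp add: YB_e1 YB_e2 YB_e3 YB_e1' YB_e3' PG_e cong: if_cong)
  also have "\<dots> = (if 0 < q then of_nat ((N - 1 - n) choose (q - 1)) * gg N (q - 1) else 0)"
    by (rule T23_alg[OF nq(1) nq(2)]) (use gg_step nq in auto)
  also have "\<dots> = (if 0 < q then PG N $$ (n, q - 1) else 0)"
    using nq by (simp add: PG_e)
  also have "\<dots> = (PG N * J N) $$ (n, q)"
    by (rule J_right[OF PG_carrier nq, symmetric])
  finally show "(YB N * PG N) $$ (n, q) = (PG N * J N) $$ (n, q)" .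
qed (auto simp: PG_def J_def YB_def)

lemma T3: "YA N * PF N = PF N * J N"
proof (rule eq_matI)
  fix n q assume "n < dim_row (PF N * J N)" "q < dim_col (PF N * J N)"
  hence nq: "n < N" "q < N" by (auto simp: PF_def J_def)
  have "(YA N * PF N) $$ (n, q) = (if 0 < n then YA N $$ (n,n-1) * PF N $$ (n-1,q) else 0) + YA N $$ (n,n) * PF N $$ (n,q)
     + (if n + 1 < N then YA N $$ (n,n+1) * PF N $$ (n+1,q) else 0)"
    by (rule tri_left[OF YA_carrier PF_carrier nq YA_tri])
  also have "\<dots> = (if 0 < n then (- of_nat n * 1) * (of_nat ((N - 1 - (n - 1)) choose q) * ff N q) else 0)
     + (1 * of_int (2 * int n - int N + 1)) * (of_nat ((N - 1 - n) choose q) * ff N q)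
     + (if n + 1 < N then (of_nat (N - (n + 1)) * 1) * (of_nat ((N - 1 - (n + 1)) choose q) * ff N q) else 0)"
    using nq by (simp add: YA_e1 YA_e2 YA_e3 YA_e1' YA_e3' PF_e cong: if_cong)
  also have "\<dots> = (if 0 < q then of_nat ((N - 1 - n) choose (q - 1)) * ff N (q - 1) else 0)"
    by (rule T23_alg[OF nq(1) nq(2)]) (use ff_step nq in auto)
  also have "\<dots> = (if 0 < q then PF N $$ (n, q - 1) else 0)"
    using nq by (simp add: PF_e)
  also have "\<dots> = (PF N * J N) $$ (n, q)"
    by (rule J_right[OF PF_carrier nq, symmetric])
  finally show "(YA N * PF N) $$ (n, q) = (PF N * J N) $$ (n, q)" .
qed (auto simp: PF_def J_def YA_def)


lemma HAO_carrier[simp]: "H_AO N \<in> carrier_mat N N" by (simp add: H_AO_def)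
lemma HBH_carrier[simp]: "H_BH N \<in> carrier_mat N N" by (simp add: H_BH_def)
lemma B_carrier[simp]: "B_mat N \<in> carrier_mat N N" by (simp add: B_mat_def)
lemma A_carrier[simp]: "A_mat N \<in> carrier_mat N N" by (simp add: A_mat_def)
lemma S_carrier[simp]: "S_mat N \<in> carrier_mat N N" unfolding S_mat_def by (rule mult_carrier_mat[OF mult_carrier_mat[OF B_carrier R_carrier] A_carrier])
lemma QBH_carrier[simp]: "Q_BH N \<in> carrier_mat N N" unfolding Q_BH_def by (rule mult_carrier_mat[OF mult_carrier_mat[OF D_carrier P_carrier] G_carrier])
lemma QAO_carrier[simp]: "Q_AO N \<in> carrier_mat N N" unfolding Q_AO_def by (rule mult_carrier_mat[OF mult_carrier_mat[OF C_carrier P_carrier] F_carrier])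

lemma dg_inv:
  assumes "\<And>k. k < N \<Longrightarrow> f k * g k = 1"
  shows "dg N f * dg N g = 1\<^sub>m N"
  unfolding dg_mult_left[OF dg_carrier]
  by (rule eq_matI) (auto simp: dg_def assms)

lemma sandwich:
  fixes A X U V Y C :: "complex mat"
  assumes c: "A \<in> carrier_mat N N" "X \<in> carrier_mat N N" "U \<in> carrier_mat N N"
    "V \<in> carrier_mat N N" "Y \<in> carrier_mat N N" "C \<in> carrier_mat N N"
    and UV: "U * V = 1\<^sub>m N"
  shows "(A * X * U) * (V * Y * C) = A * (X * Y) * C"
proof -
  have "(A * X * U) * (V * Y * C) = (A * X) * (U * (V * (Y * C)))"
    using c by (simp add: assoc_mult_mat[of _ N N _ N _ N])
  also have "U * (V * (Y * C)) = (U * V) * (Y * C)"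
    using c by (simp add: assoc_mult_mat[of _ N N _ N _ N])
  also have "\<dots> = Y * C" using c UV by simp
  also have "(A * X) * (Y * C) = A * (X * Y) * C"
    using c by (simp add: assoc_mult_mat[of _ N N _ N _ N])
  finally show ?thesis .
qed

lemma sandwich2:
  fixes A X U V Y :: "complex mat"
  assumes c: "A \<in> carrier_mat N N" "X \<in> carrier_mat N N" "U \<in> carrier_mat N N"
    "V \<in> carrier_mat N N" "Y \<in> carrier_mat N N"
    and UV: "U * V = 1\<^sub>m N"
  shows "(A * X * U) * (V * Y) = A * (X * Y)"
proof -
  have "(A * X * U) * (V * Y) = (A * X) * (U * (V * Y))"
    using c by (simp add: assoc_mult_mat[of _ N N _ N _ N])
  also have "U * (V * Y) = (U * V) * Y"
    using c by (simp add: assoc_mult_mat[of _ N N _ N _ N])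
  also have "\<dots> = Y" using c UV by simp
  also have "(A * X) * Y = A * (X * Y)"
    using c by (simp add: assoc_mult_mat[of _ N N _ N _ N])
  finally show ?thesis .
qed

lemma L1: "H_AO N * S_mat N = S_mat N * H_BH N"
proof -
  have i1: "dg N (\<lambda>k. ccs N k * (-beta)^k) * dg N (\<lambda>k. inverse (ccs N k * (-beta)^k)) = 1\<^sub>m N"
    by (rule dg_inv, rule right_inverse) (use ccs_nz beta_nz in auto)
  have i2: "dg N (\<lambda>k. ccs N k * beta^k) * dg N (\<lambda>k. inverse (ccs N k * beta^k)) = 1\<^sub>m N"
    by (rule dg_inv, rule right_inverse) (use ccs_nz beta_nz in auto)
  have "H_AO N * S_mat N = dg N (\<lambda>k. inverse (ccs N k * (-beta)^k)) * (XA N * Pt N) * dg N (\<lambda>k. ccs N k * beta^k)"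
    unfolding HAO_L[of N] S_dec[of N] by (rule sandwich[OF _ _ _ _ _ _ i1]) auto
  also have "\<dots> = dg N (\<lambda>k. inverse (ccs N k * (-beta)^k)) * (Pt N * XB N) * dg N (\<lambda>k. ccs N k * beta^k)"
    unfolding T1 ..
  also have "\<dots> = S_mat N * H_BH N"
    unfolding HBH_K[of N] S_dec[of N] by (rule sandwich[OF _ _ _ _ _ _ i2, symmetric]) auto
  finally show ?thesis .
qed

lemma L2: "H_BH N * Q_BH N = Q_BH N * J N"
proof -
  have i: "dg N (\<lambda>k. inverse (\<i>^k * ccs N k)) * dg N (\<lambda>k. \<i>^k * ccs N k) = 1\<^sub>m N"
    by (rule dg_inv, rule left_inverse) (use ccs_nz in auto)
  have "H_BH N * Q_BH N = dg N (\<lambda>k. \<i>^k * ccs N k) * (YB N * PG N)"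
    unfolding HBH_K2[of N] QBH_dec[of N] by (rule sandwich2[OF _ _ _ _ _ i]) auto
  also have "\<dots> = dg N (\<lambda>k. \<i>^k * ccs N k) * (PG N * J N)" unfolding T2 ..
  also have "\<dots> = Q_BH N * J N"
    unfolding QBH_dec[of N] by (rule assoc_mult_mat[of _ N N _ N _ N, symmetric]) auto
  finally show ?thesis .
qed

lemma L3: "H_AO N * Q_AO N = Q_AO N * J N"
proof -
  have i: "dg N (\<lambda>k. inverse (ccs N k)) * dg N (ccs N) = 1\<^sub>m N"
    by (rule dg_inv, rule left_inverse) (use ccs_nz in auto)
  have "H_AO N * Q_AO N = dg N (ccs N) * (YA N * PF N)"
    unfolding HAO_E[of N] QAO_dec[of N] by (rule sandwich2[OF _ _ _ _ _ i]) auto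
  also have "\<dots> = dg N (ccs N) * (PF N * J N)" unfolding T3 ..
  also have "\<dots> = Q_AO N * J N"
    unfolding QAO_dec[of N] by (rule assoc_mult_mat[of _ N N _ N _ N, symmetric]) auto
  finally show ?thesis .
qed


lemma det_upper_gen:
  assumes "upper_triangular A" "(A :: complex mat) \<in> carrier_mat N N"
  shows "det A = (\<Prod>i<N. A $$ (i,i))"
proof -
  have "det A = prod_list (diag_mat A)" by (rule det_upper_triangular[OF assms])
  also have "\<dots> = (\<Prod>i<N. A $$ (i,i))"
    using assms(2) by (simp add: diag_mat_def prod.distinct_set_conv_list[symmetric] lessThan_atLeast0)
  finally show ?thesis .
qed

lemma det_dg_nz: "(\<And>i. i < N \<Longrightarrow> f i \<noteq> 0) \<Longrightarrow> det (dg N f) \<noteq> 0"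
  unfolding det_dg by auto

lemma det_R: "det (R_mat N) = 1"
proof -
  have "upper_triangular (R_mat N)" by (auto simp: upper_triangular_def R_mat_def)
  hence "det (R_mat N) = (\<Prod>i<N. R_mat N $$ (i,i))" using det_upper_gen R_carrier by blast
  also have "\<dots> = (\<Prod>i<N. 1)" by (rule prod.cong) (auto simp: R_mat_def)
  finally show ?thesis by simp
qed

lemma det_S: "det (S_mat N) \<noteq> 0"
proof -
  have "det (S_mat N) = det (B_mat N) * det (R_mat N) * det (A_mat N)"
    unfolding S_mat_def
    by (simp add: det_mult[OF mult_carrier_mat[OF B_carrier R_carrier] A_carrier] det_mult[OF B_carrier R_carrier])
  moreover have "det (B_mat N) \<noteq> 0" unfolding B_dg by (rule det_dg_nz) (use beta_nz in simp)
  moreover have "det (A_mat N) \<noteq> 0" unfolding A_dg by (rule det_dg_nz) (use beta_nz in simp)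
  ultimately show ?thesis by (simp add: det_R)
qed

definition Kr :: "nat \<Rightarrow> complex mat" where
  "Kr N = mat N N (\<lambda>(i,j). if i + j = N - 1 then 1 else 0)"

lemma Kr_carrier[simp]: "Kr N \<in> carrier_mat N N" by (simp add: Kr_def)

lemma PK: "P_mat N * Kr N = mat N N (\<lambda>(i,j). of_nat ((N - 1 - i) choose (N - 1 - j)))"
proof (rule eq_matI)
  fix i j assume "i < dim_row (mat N N (\<lambda>(i,j). (of_nat ((N - 1 - i) choose (N - 1 - j)) :: complex)))"
    "j < dim_col (mat N N (\<lambda>(i,j). (of_nat ((N - 1 - i) choose (N - 1 - j)) :: complex)))"
  hence ij: "i < N" "j < N" by auto
  have "(P_mat N * Kr N) $$ (i,j) = (\<Sum>l<N. P_mat N $$ (i,l) * Kr N $$ (l,j))"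
    using mult_mat_entry[OF P_carrier Kr_carrier ij] .
  also have "\<dots> = (\<Sum>l<N. if l = N - 1 - j then P_mat N $$ (i, N - 1 - j) else 0)"
    by (rule sum.cong) (use ij in \<open>auto simp: Kr_def\<close>)
  also have "\<dots> = P_mat N $$ (i, N - 1 - j)" using ij by simp
  finally show "(P_mat N * Kr N) $$ (i,j) = mat N N (\<lambda>(i,j). of_nat ((N - 1 - i) choose (N - 1 - j))) $$ (i,j)"
    using ij by (simp add: P_mat_def)
qed (auto simp: P_mat_def Kr_def)

lemma det_P: "det (P_mat N) \<noteq> 0"
proof -
  let ?M = "mat N N (\<lambda>(i,j). (of_nat ((N - 1 - i) choose (N - 1 - j)) :: complex))"
  have "upper_triangular ?M" by (auto simp: upper_triangular_def binomial_eq_0)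
  hence "det ?M = (\<Prod>i<N. ?M $$ (i,i))" using det_upper_gen[of ?M N] by simp
  also have "\<dots> = (\<Prod>i<N. 1)" by (rule prod.cong) auto
  finally have "det ?M = 1" by simp
  hence "det (P_mat N) * det (Kr N) = 1"
    using det_mult[OF P_carrier Kr_carrier] PK by simp
  thus ?thesis by auto
qed

lemma det_QBH: "det (Q_BH N) \<noteq> 0"
proof -
  have "det (Q_BH N) = det (D_mat N) * det (P_mat N) * det (G_mat N)"
    unfolding Q_BH_def
    by (simp add: det_mult[OF mult_carrier_mat[OF D_carrier P_carrier] G_carrier] det_mult[OF D_carrier P_carrier])
  moreover have "D_mat N = dg N (\<lambda>k. \<i>^k * ccs N k)" by (rule eq_matI) (auto simp: D_mat_def dg_def ccs_def sq_def)
  moreover have "G_mat N = dg N (gg N)" by (rule eq_matI) (auto simp: G_mat_def dg_def gg_def)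
  moreover have "det (dg N (\<lambda>k. \<i>^k * ccs N k)) \<noteq> 0" by (rule det_dg_nz) (use ccs_nz in simp)
  moreover have "det (dg N (gg N)) \<noteq> 0" by (rule det_dg_nz) (simp add: gg_def)
  ultimately show ?thesis using det_P by simp
qed

lemma ccs0: "ccs N 0 = 1" by (simp add: ccs_def sq_def)

lemma QBH_last: "k < N \<Longrightarrow> Q_BH N $$ (k, N - 1) = (if k = 0 then 1 else 0)"
proof -
  assume k: "k < N"
  have "Q_BH N $$ (k, N - 1) = \<i>^k * ccs N k * PG N $$ (k, N - 1)"
    unfolding QBH_dec dg_mult_left[OF PG_carrier] using k by simp
  also have "\<dots> = (if k = 0 then 1 else 0)"
    using k by (auto simp: PG_e ccs0 gg_def binomial_eq_0)
  finally show ?thesis .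
qed

lemma QAO_last: "k < N \<Longrightarrow> Q_AO N $$ (k, N - 1) = (if k = 0 then 1 else 0)"
proof -
  assume k: "k < N"
  have "Q_AO N $$ (k, N - 1) = ccs N k * PF N $$ (k, N - 1)"
    unfolding QAO_dec dg_mult_left[OF PF_carrier] using k by simp
  also have "\<dots> = (if k = 0 then 1 else 0)"
    using k by (auto simp: PF_e ccs0 ff_def binomial_eq_0)
  finally show ?thesis .
qed

lemma QBH_last': "k < N \<Longrightarrow> Q_BH N $$ (k, N - Suc 0) = (if k = 0 then 1 else 0)"
  using QBH_last by simp
lemma QAO_last': "k < N \<Longrightarrow> Q_AO N $$ (k, N - Suc 0) = (if k = 0 then 1 else 0)"
  using QAO_last by simp

lemma S_first: "i < N \<Longrightarrow> S_mat N $$ (i, 0) = (if i = 0 then 1 else 0)"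
  unfolding S_entries by (auto simp: R_mat_def)

lemma SQ_last: "i < N \<Longrightarrow> (S_mat N * Q_BH N) $$ (i, N - 1) = (if i = 0 then 1 else 0)"
proof -
  assume i: "i < N"
  hence N: "N - 1 < N" by simp
  have "(S_mat N * Q_BH N) $$ (i, N - 1) = (\<Sum>k<N. S_mat N $$ (i,k) * Q_BH N $$ (k, N - 1))"
    using mult_mat_entry[OF S_carrier QBH_carrier i N] .
  also have "\<dots> = (\<Sum>k<N. if k = 0 then S_mat N $$ (i,0) else 0)"
    by (rule sum.cong) (auto simp: QBH_last QBH_last')
  also have "\<dots> = S_mat N $$ (i,0)" using i by simp
  finally show ?thesis using S_first[OF i] by simp
qed

lemma SQ_last': "i < N \<Longrightarrow> (S_mat N * Q_BH N) $$ (i, N - Suc 0) = (if i = 0 then 1 else 0)"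
  using SQ_last by simp

lemma chain_unique:
  fixes H X Y :: "complex mat"
  assumes c: "H \<in> carrier_mat N N" "X \<in> carrier_mat N N" "Y \<in> carrier_mat N N"
    and hx: "H * X = X * J N" and hy: "H * Y = Y * J N"
    and last: "\<And>i. i < N \<Longrightarrow> X $$ (i, N - 1) = Y $$ (i, N - 1)"
  shows "X = Y"
proof -
  have step: "X $$ (i, q) = (\<Sum>k<N. H $$ (i,k) * X $$ (k, q + 1))"
    "Y $$ (i, q) = (\<Sum>k<N. H $$ (i,k) * Y $$ (k, q + 1))" if "i < N" "q + 1 < N" for i q
  proof -
    have qq: "q + 1 < N" using that by simp
    have "X $$ (i, q) = (X * J N) $$ (i, q + 1)" using J_right[OF c(2) that(1) qq] by simp
    also have "\<dots> = (H * X) $$ (i, q + 1)" using hx by simp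
    also have "\<dots> = (\<Sum>k<N. H $$ (i,k) * X $$ (k, q + 1))" using mult_mat_entry[OF c(1) c(2) that(1) qq] .
    finally show "X $$ (i, q) = (\<Sum>k<N. H $$ (i,k) * X $$ (k, q + 1))" .
    have "Y $$ (i, q) = (Y * J N) $$ (i, q + 1)" using J_right[OF c(3) that(1) qq] by simp
    also have "\<dots> = (H * Y) $$ (i, q + 1)" using hy by simp
    also have "\<dots> = (\<Sum>k<N. H $$ (i,k) * Y $$ (k, q + 1))" using mult_mat_entry[OF c(1) c(3) that(1) qq] .
    finally show "Y $$ (i, q) = (\<Sum>k<N. H $$ (i,k) * Y $$ (k, q + 1))" .
  qed
  have main: "d < N \<Longrightarrow> (\<forall>i<N. X $$ (i, N - 1 - d) = Y $$ (i, N - 1 - d))" for d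
  proof (induction d)
    case 0 thus ?case using last by simp
  next
    case (Suc d)
    hence IH: "\<forall>i<N. X $$ (i, N - 1 - d) = Y $$ (i, N - 1 - d)" by simp
    have e: "N - 1 - Suc d + 1 = N - 1 - d" "N - 1 - Suc d + 1 < N" using Suc.prems by auto
    show ?case
    proof (intro allI impI)
      fix i assume i: "i < N"
      have "X $$ (i, N - 1 - Suc d) = (\<Sum>k<N. H $$ (i,k) * X $$ (k, N - 1 - d))"
        using step(1)[OF i e(2)] unfolding e(1) .
      also have "\<dots> = (\<Sum>k<N. H $$ (i,k) * Y $$ (k, N - 1 - d))"
        using IH by (intro sum.cong) auto
      also have "\<dots> = Y $$ (i, N - 1 - Suc d)"
        using step(2)[OF i e(2)] unfolding e(1) by simp
      finally show "X $$ (i, N - 1 - Suc d) = Y $$ (i, N - 1 - Suc d)" .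
    qed
  qed
  show ?thesis
  proof (rule eq_matI)
    fix i j assume "i < dim_row Y" "j < dim_col Y"
    hence ij: "i < N" "j < N" using c by auto
    have "N - 1 - (N - 1 - j) = j" using ij by simp
    thus "X $$ (i,j) = Y $$ (i,j)" using main[of "N - 1 - j"] ij by auto
  qed (use c in auto)
qed

lemma SQ: "S_mat N * Q_BH N = Q_AO N"
proof (rule chain_unique[OF HAO_carrier _ QAO_carrier _ L3])
  show "S_mat N * Q_BH N \<in> carrier_mat N N" by (rule mult_carrier_mat[OF S_carrier QBH_carrier])
  have "H_AO N * (S_mat N * Q_BH N) = (H_AO N * S_mat N) * Q_BH N"
    by (rule assoc_mult_mat[of _ N N _ N _ N, symmetric]) auto
  also have "\<dots> = (S_mat N * H_BH N) * Q_BH N" unfolding L1 ..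
  also have "\<dots> = S_mat N * (H_BH N * Q_BH N)" by (rule assoc_mult_mat[of _ N N _ N _ N]) auto
  also have "\<dots> = S_mat N * (Q_BH N * J N)" unfolding L2 ..
  also have "\<dots> = (S_mat N * Q_BH N) * J N" by (rule assoc_mult_mat[of _ N N _ N _ N, symmetric]) auto
  finally show "H_AO N * (S_mat N * Q_BH N) = (S_mat N * Q_BH N) * J N" .
  show "\<And>i. i < N \<Longrightarrow> (S_mat N * Q_BH N) $$ (i, N - 1) = Q_AO N $$ (i, N - 1)"
    by (simp add: SQ_last' QAO_last')
qed

theorem mainTheorem3:
  fixes N :: nat
  assumes "N \<ge> 2"
  shows "invertible_mat (S_mat N)
    \<and> (\<exists>Sinv \<in> carrier_mat N N.
          S_mat N * Sinv = 1\<^sub>m N \<and> Sinv * S_mat N = 1\<^sub>m N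
          \<and> H_AO N = S_mat N * H_BH N * Sinv)
    \<and> invertible_mat (Q_BH N)
    \<and> (\<exists>Qinv \<in> carrier_mat N N.
          Q_BH N * Qinv = 1\<^sub>m N \<and> Qinv * Q_BH N = 1\<^sub>m N
          \<and> S_mat N = Q_AO N * Qinv)"
proof (intro conjI)
  show "invertible_mat (S_mat N)" by (rule det_invertible[OF S_carrier det_S])
  show "invertible_mat (Q_BH N)" by (rule det_invertible[OF QBH_carrier det_QBH])
  obtain Sinv where Si: "Sinv \<in> carrier_mat N N" "S_mat N * Sinv = 1\<^sub>m N" "Sinv * S_mat N = 1\<^sub>m N"
    using det_inv_ex[OF S_carrier det_S] by blast
  have "H_AO N = H_AO N * (S_mat N * Sinv)" using Si right_mult_one_mat[OF HAO_carrier] by simp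
  also have "\<dots> = (H_AO N * S_mat N) * Sinv" using Si by (simp add: assoc_mult_mat[of _ N N _ N _ N])
  also have "\<dots> = S_mat N * H_BH N * Sinv" unfolding L1 ..
  finally show "\<exists>Sinv \<in> carrier_mat N N. S_mat N * Sinv = 1\<^sub>m N \<and> Sinv * S_mat N = 1\<^sub>m N
          \<and> H_AO N = S_mat N * H_BH N * Sinv" using Si by blast
  obtain Qinv where Qi: "Qinv \<in> carrier_mat N N" "Q_BH N * Qinv = 1\<^sub>m N" "Qinv * Q_BH N = 1\<^sub>m N"
    using det_inv_ex[OF QBH_carrier det_QBH] by blast
  have "S_mat N = S_mat N * (Q_BH N * Qinv)" using Qi right_mult_one_mat[OF S_carrier] by simp
  also have "\<dots> = (S_mat N * Q_BH N) * Qinv" using Qi by (simp add: assoc_mult_mat[of _ N N _ N _ N])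
  also have "\<dots> = Q_AO N * Qinv" unfolding SQ ..
  finally show "\<exists>Qinv \<in> carrier_mat N N. Q_BH N * Qinv = 1\<^sub>m N \<and> Qinv * Q_BH N = 1\<^sub>m N
          \<and> S_mat N = Q_AO N * Qinv" using Qi by blast
qed

end
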